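(* Let $b$ be a prime and let $p$ be a prime of the form $p=bt+1$ with $t$ a positive integer and $b\nmid t$. Then $$g\Big(\tfrac{p^b-1}{b^2},\,p^b\Big)=b\,g(t,p).$$ In particular, if $b$ is an odd prime and $p=2b+1$ is prime, then $g\big(\tfrac{p^b-1}{b^2},p^b\big)=2b$.
   Context: For a prime power $q$ and a positive integer $k$, the Waring number $g(k,q)$ is the smallest $s$ (if it exists) such that every element of $\mathbb{F}_q$ is a sum of $s$ $k$-th powers of elements of $\mathbb{F}_q$. *)

theory Defs
  imports "HOL-Computational_Algebra.Primes"
begin

text \<open>Finite fields F_q are represented by finite field types 'a with CARD('a) = q.
  waring_rep k s: every element of the field is a sum of s k-th powers.\<close>

definition waring_rep :: "nat \<Rightarrow> nat \<Rightarrow> ('a::{field,finite}) itself \<Rightarrow> bool" where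
  "waring_rep k s T \<longleftrightarrow> (\<forall>x::'a. \<exists>f::nat \<Rightarrow> 'a. x = (\<Sum>i<s. f i ^ k))"

text \<open>The Waring number g(k,q): the least such s (meaningful when some s exists).\<close>
definition waring_number :: "nat \<Rightarrow> ('a::{field,finite}) itself \<Rightarrow> nat" where
  "waring_number k T = (LEAST s. waring_rep k s T)"

end

theory Submission imports Defs "HOL-Algebra.Multiplicative_Group" "HOL-Number_Theory.Residues"
  "HOL-Computational_Algebra.Polynomial" begin


lemma card_times_zero:
  fixes x :: "'x::{ring_1,finite}"
  shows "of_nat (card (UNIV::'x set)) * x = 0"
proof -
  have "(\<Sum>y\<in>UNIV. y + x) = (\<Sum>y\<in>UNIV. (y::'x))"
    by (rule sum.reindex_bij_witness[of _ "\<lambda>y. y - x" "\<lambda>y. y + x"]) auto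
  then show ?thesis by (simp add: sum.distrib)
qed

lemma char_p:
  fixes p e :: nat
  assumes "prime p" "card (UNIV::'x::{field,finite} set) = p ^ e"
  shows "(of_nat p :: 'x) = 0"
proof -
  have "(of_nat (p^e) :: 'x) = 0" using card_times_zero[of "1::'x"] assms by simp
  then show ?thesis by simp
qed

lemma of_int_eq_iff_dvd:
  fixes p e :: nat
  assumes "prime p" "card (UNIV::'x::{field,finite} set) = p ^ e"
  shows "((of_int u :: 'x) = of_int v) \<longleftrightarrow> int p dvd (u - v)"
proof -
  have p0: "(of_int (int p) :: 'x) = 0" using char_p[OF assms] by simp
  have "(of_int (u - v) :: 'x) = 0 \<longleftrightarrow> int p dvd (u - v)"
  proof
    assume "int p dvd (u - v)" then obtain w where "u - v = int p * w" by blast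
    then show "(of_int (u - v) :: 'x) = 0" using p0 by simp
  next
    assume h: "(of_int (u - v) :: 'x) = 0"
    show "int p dvd (u - v)"
    proof (rule ccontr)
      assume "\<not> int p dvd (u - v)"
      then have "coprime (int p) (u - v)" using assms(1)
        by (simp add: prime_imp_coprime)
      then obtain a c where "a * int p + c * (u - v) = 1"
        by (metis bezout_int gcd.commute coprime_iff_gcd_eq_1)
      then have "(of_int (a * int p + c * (u - v)) :: 'x) = 1" by simp
      then show False using p0 h by simp
    qed
  qed
  then show ?thesis by simp
qed

lemma of_nat_mod_p:
  fixes p e :: nat
  assumes "prime p" "card (UNIV::'x::{field,finite} set) = p ^ e"
  shows "(of_nat (m mod p) :: 'x) = of_nat m"
proof -
  have "(of_nat m :: 'x) = of_nat (m mod p + p * (m div p))" by simp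
  also have "\<dots> = of_nat (m mod p)" using char_p[OF assms] by (simp only: of_nat_add of_nat_mult) simp
  finally show ?thesis by simp
qed

lemma Ints_eq_nat_image:
  fixes p e :: nat
  assumes "prime p" "card (UNIV::'x::{field,finite} set) = p ^ e"
  shows "(\<int> :: 'x set) = of_nat ` {..<p}"
proof
  show "(\<int> :: 'x set) \<subseteq> of_nat ` {..<p}"
  proof
    fix x :: 'x assume "x \<in> \<int>"
    then obtain u where u: "x = of_int u" by (auto elim: Ints_cases)
    have pp: "p > 0" using assms(1) prime_gt_0_nat by blast
    have "(of_int u :: 'x) = of_int (u mod int p)"
      using of_int_eq_iff_dvd[OF assms] by (simp add: mod_eq_dvd_iff[symmetric] )
    also have "u mod int p = int (nat (u mod int p))" using pp by simp
    finally have "x = of_nat (nat (u mod int p))" using u by simp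
    moreover have "nat (u mod int p) < p" using pp by (simp add: nat_less_iff)
    ultimately show "x \<in> of_nat ` {..<p}" by blast
  qed
next
  show "of_nat ` {..<p} \<subseteq> (\<int> :: 'x set)" by (auto simp: Ints_of_nat)
qed

lemma card_Ints:
  fixes p e :: nat
  assumes "prime p" "card (UNIV::'x::{field,finite} set) = p ^ e"
  shows "card (\<int> :: 'x set) = p"
proof -
  have "inj_on (of_nat :: nat \<Rightarrow> 'x) {..<p}"
  proof (rule inj_onI)
    fix u v assume "u \<in> {..<p}" "v \<in> {..<p}" "(of_nat u :: 'x) = of_nat v"
    then have "int p dvd (int u - int v)" using of_int_eq_iff_dvd[OF assms, of "int u" "int v"] by simp
    moreover have "\<bar>int u - int v\<bar> < int p" using \<open>u \<in> {..<p}\<close> \<open>v \<in> {..<p}\<close> by auto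
    ultimately have "int u - int v = 0"
      using dvd_imp_le_int[of "int u - int v" "int p"] by force
    then show "u = v" by simp
  qed
  then show ?thesis by (simp add: Ints_eq_nat_image[OF assms] card_image)
qed

lemma Ints_fermat:
  fixes p e :: nat
  assumes "prime p" "card (UNIV::'x::{field,finite} set) = p ^ e" "(x::'x) \<in> \<int>"
  shows "x ^ p = x"
proof -
  obtain m where m: "x = of_nat m" using Ints_eq_nat_image[OF assms(1,2)] assms(3) by auto
  show ?thesis
  proof (cases "p dvd m")
    case True
    then have "x = 0" using m of_nat_mod_p[OF assms(1,2), of m] by simp
    then show ?thesis using assms(1) prime_gt_0_nat by simp
  next
    case False
    then have "[m ^ (p - 1) = 1] (mod p)" using fermat_theorem assms(1) by blast
    then have "[m ^ (p - 1) * m = 1 * m] (mod p)" by (rule cong_scalar_right)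
    moreover have "m ^ (p - 1) * m = m ^ p" using assms(1) prime_gt_0_nat
      by (metis Suc_diff_1 power_Suc2)
    ultimately have "m ^ p mod p = m mod p" by (simp add: cong_def)
    then have "(of_nat (m^p) :: 'x) = of_nat m"
      using of_nat_mod_p[OF assms(1,2), of "m^p"] of_nat_mod_p[OF assms(1,2), of m] by metis
    then show ?thesis using m by simp
  qed
qed

hide_const (open) Multiset.mult

definition cR :: "'a::field ring" where
 "cR = \<lparr> carrier = UNIV, mult = (*), one = 1, zero = 0, add = (+) \<rparr>"

lemma cR_field: "field (cR :: 'a::field ring)"
proof -
  have cr: "cring (cR :: 'a ring)"
    apply (rule cringI)
      apply (rule abelian_groupI)
           apply (auto simp: cR_def algebra_simps)
      apply (metis add.commute neg_eq_iff_add_eq_0)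
    apply (rule comm_monoidI)
        apply (auto simp: cR_def algebra_simps)
    done
  show ?thesis
    apply (rule cring.cring_fieldI[OF cr])
    apply (auto simp: cR_def Units_def)
    by (metis field_class.field_inverse mult.commute)
qed

lemma cR_pow: "x [^]\<^bsub>(cR::'a::field ring)\<^esub> (n::nat) = x ^ n"
  by (induct n) (auto simp: cR_def)

lemma gen_exists:
  shows "\<exists>g::'a::{field,finite}. g \<noteq> 0 \<and> (\<forall>x. x\<noteq>0 \<longrightarrow> (\<exists>i. x = g^i)) \<and> (\<forall>i. g^i = 1 \<longleftrightarrow> (card (UNIV::'a set) - 1) dvd i)"
proof -
  interpret F: field "cR :: 'a ring" by (rule cR_field)
  have fin: "finite (carrier (cR::'a ring))" by simp
  obtain a where a: "a \<in> carrier (mult_of (cR::'a ring))" and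
    ca: "carrier (mult_of (cR::'a ring)) = {a[^]\<^bsub>cR\<^esub>i | i::nat . i \<in> UNIV}"
    using F.finite_field_mult_group_has_gen[OF fin] by blast
  interpret G: group "mult_of (cR::'a ring)" by (rule F.field_mult_group)
  have ord: "G.ord a = Coset.order (mult_of (cR::'a ring))"
  proof -
    have "G.ord a \<noteq> 0" using G.ord_ge_1[OF _ a] F.finite_mult_of[OF fin] by simp
    then have "generate (mult_of cR) {a} = carrier (mult_of cR)"
      using G.generate_pow_nat[OF a] ca by (auto simp: nat_pow_mult_of)
    then show ?thesis using G.generate_pow_card[OF a] unfolding Coset.order_def by simp
  qed
  have o2: "Coset.order (mult_of (cR::'a ring)) = card (UNIV::'a set) - 1"
    using F.order_mult_of[OF fin] by (simp add: Coset.order_def cR_def)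
  show ?thesis
  proof (intro exI[of _ a] conjI allI impI)
    show "a \<noteq> 0" using a by (simp add: cR_def)
    fix x :: 'a assume "x \<noteq> 0"
    then have "x \<in> carrier (mult_of cR)" by (simp add: cR_def)
    then show "\<exists>i. x = a ^ i" using ca by (auto simp: cR_pow)
  next
    fix i :: nat
    have "a [^]\<^bsub>mult_of cR\<^esub> i = \<one>\<^bsub>mult_of cR\<^esub> \<longleftrightarrow> G.ord a dvd i"
      using G.pow_eq_id[OF a] by simp
    then show "a ^ i = 1 \<longleftrightarrow> (card (UNIV::'a set) - 1) dvd i"
      using ord o2 by (simp add: nat_pow_mult_of cR_pow) (simp add: cR_def)
  qed
qed



lemma frob2:
  fixes x y :: "'x::field"
  assumes "prime p" "(of_nat p :: 'x) = 0"
  shows "(x + y) ^ p = x ^ p + y ^ p"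
proof -
  have p0: "p \<noteq> 0" using assms(1) by auto
  have "(x+y)^p = (\<Sum>k\<le>p. of_nat (p choose k) * x^k * y^(p-k))" by (rule binomial_ring)
  also have "\<dots> = (\<Sum>k\<in>{0,p}. of_nat (p choose k) * x^k * y^(p-k))"
  proof (rule sum.mono_neutral_right)
    show "\<forall>i\<in>{..p} - {0, p}. of_nat (p choose i) * x ^ i * y ^ (p - i) = 0"
    proof
      fix i assume i: "i \<in> {..p} - {0, p}"
      then have "p dvd (p choose i)" using dvd_choose_prime[of i p] assms(1) by auto
      then obtain c where "p choose i = p * c" by blast
      then have "(of_nat (p choose i) :: 'x) = 0" using assms(2) by simp
      then show "of_nat (p choose i) * x ^ i * y ^ (p - i) = 0" by simp
    qed
  qed auto
  also have "\<dots> = x^p + y^p" using p0 by simp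
  finally show ?thesis .
qed

lemma frob_sum:
  fixes f :: "'b \<Rightarrow> 'x::field"
  assumes "prime p" "(of_nat p :: 'x) = 0"
  shows "(sum f A) ^ p = (\<Sum>i\<in>A. f i ^ p)"
proof (induction A rule: infinite_finite_induct)
  case (infinite A) then show ?case using assms(1) by (simp add: zero_power prime_gt_0_nat)
next
  case empty then show ?case using assms(1) by (simp add: zero_power prime_gt_0_nat)
next
  case (insert x F) then show ?case using frob2[OF assms] by simp
qed

locale W =
  fixes b p t :: nat and TY :: "'a::{field,finite} itself"
  assumes bprime: "prime b" and pprime: "prime p" and tpos: "t > 0"
    and pdef: "p = b * t + 1" and nbt: "\<not> b dvd t"
    and cardF: "card (UNIV::'a set) = p ^ b"
begin

lemma b2: "b \<ge> 2" using bprime prime_ge_2_nat by blast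
lemma p2: "p \<ge> 2" using pprime prime_ge_2_nat by blast

lemma pow_expand: "\<exists>m. p ^ d = 1 + d * b * t + b^2 * m"
proof (induction d)
  case 0 then show ?case by simp
next
  case (Suc d)
  then obtain m where m: "p ^ d = 1 + d * b * t + b^2 * m" by blast
  have "p ^ Suc d = (1 + d * b * t + b^2 * m) * (b * t + 1)" using m pdef by simp
  also have "\<dots> = 1 + Suc d * b * t + b^2 * (m + d * t * t + b * t * m)"
    by (simp add: algebra_simps power2_eq_square)
  finally show ?case by blast
qed

definition k :: nat where "k = (p ^ b - 1) div b^2"

lemma qk: "p ^ b - 1 = b^2 * k \<and> k > 0"
proof -
  obtain m where m: "p ^ b = 1 + b * b * t + b^2 * m" using pow_expand by blast
  then have "p ^ b - 1 = b^2 * (t + m)" by (simp add: algebra_simps power2_eq_square)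
  then show ?thesis using tpos b2 by (simp add: k_def)
qed

lemma cardF1: "card (UNIV::'a set) - 1 = b^2 * k" using qk cardF by simp

lemma charF: "(of_nat p :: 'a) = 0" using char_p[OF pprime cardF] .

definition g :: 'a where
  "g = (SOME g::'a. g \<noteq> 0 \<and> (\<forall>x. x\<noteq>0 \<longrightarrow> (\<exists>i. x = g^i)) \<and> (\<forall>i. g^i = 1 \<longleftrightarrow> (card (UNIV::'a set) - 1) dvd i))"

lemma g_props: "g \<noteq> 0" "\<And>x. x \<noteq> 0 \<Longrightarrow> \<exists>i. x = g^i" "\<And>i. g^i = 1 \<longleftrightarrow> (b^2 * k) dvd i"
proof -
  have "g \<noteq> 0 \<and> (\<forall>x. x\<noteq>0 \<longrightarrow> (\<exists>i. x = g^i)) \<and> (\<forall>i. g^i = 1 \<longleftrightarrow> (card (UNIV::'a set) - 1) dvd i)"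
    unfolding g_def by (rule someI_ex) (rule gen_exists)
  then show "g \<noteq> 0" "\<And>x. x \<noteq> 0 \<Longrightarrow> \<exists>i. x = g^i" "\<And>i. g^i = 1 \<longleftrightarrow> (b^2 * k) dvd i"
    using cardF1 by auto
qed

definition zeta :: 'a where "zeta = g ^ k"

lemma zeta_one: "zeta ^ i = 1 \<longleftrightarrow> b^2 dvd i"
  using g_props(3)[of "k*i"] qk by (simp add: zeta_def power_mult[symmetric] mult.commute)

lemma zeta_nz: "zeta \<noteq> 0" using g_props(1) by (simp add: zeta_def)

lemma zeta_eq: assumes "zeta ^ u = zeta ^ v" "u \<le> v" shows "b^2 dvd (v - u)"
proof -
  have "zeta ^ v = zeta ^ u * zeta ^ (v - u)" using assms(2) by (simp add: power_add[symmetric])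
  then have "zeta ^ (v - u) = 1" using assms(1) zeta_nz by simp
  then show ?thesis using zeta_one by simp
qed

definition omega :: 'a where "omega = zeta ^ b"

definition e :: nat where "e = (\<Sum>i<b. p ^ i)"

lemma e_prop: "(p - 1) * e = b^2 * k"
proof -
  have "int (p ^ b) - 1 = (int p - 1) * (\<Sum>i<b. int p ^ i)" by (simp add: power_diff_1_eq)
  then have "int (p ^ b - 1) = int ((p - 1) * e)" using p2
    by (simp add: e_def of_nat_diff)
  then have "p ^ b - 1 = (p - 1) * e" by (simp only: of_nat_eq_iff)
  then show ?thesis using qk by simp
qed

lemma et: "e * t = b * k"
proof -
  have "b * (e * t) = b * (b * k)" using e_prop pdef by (simp add: power2_eq_square algebra_simps)
  then show ?thesis using b2 by simp
qed

definition c0 :: 'a where "c0 = g ^ e"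

lemma c0t: "c0 ^ t = omega"
proof -
  have "c0 ^ t = g ^ (e * t)" by (simp add: c0_def power_mult)
  also have "\<dots> = g ^ (k * b)" using et by (simp add: mult.commute)
  finally show ?thesis by (simp add: omega_def zeta_def power_mult)
qed

lemma roots_p: "{x::'a. x ^ p = x} = \<int>"
proof -
  have sub: "(\<int>::'a set) \<subseteq> {x. x ^ p = x}" using Ints_fermat[OF pprime cardF] by blast
  define P :: "'a poly" where "P = monom 1 p - monom 1 1"
  have P0: "P \<noteq> 0"
  proof
    assume "P = 0"
    then have "coeff P p = 0" by simp
    then show False using p2 by (simp add: P_def coeff_monom)
  qed
  have "degree P \<le> p" unfolding P_def using p2
    by (intro degree_diff_le) (auto intro: order.trans[OF degree_monom_le])
  moreover have "{x::'a. x ^ p = x} = {x. poly P x = 0}" by (simp add: P_def poly_monom)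
  ultimately have "card {x::'a. x ^ p = x} \<le> p" using card_poly_roots_bound[OF P0] by simp
  then have "\<int> = {x::'a. x ^ p = x}" using sub card_Ints[OF pprime cardF]
    by (intro card_seteq) auto
  then show ?thesis by simp
qed

lemma c0_Ints: "c0 \<in> \<int>"
proof -
  have "c0 ^ (p - 1) = 1" using g_props(3) e_prop by (simp add: c0_def power_mult[symmetric] mult.commute)
  moreover obtain p' where "p = Suc p'" using p2 by (cases p) auto
  ultimately have "c0 ^ p = c0" by (simp add: power_Suc2)
  then show ?thesis using roots_p by blast
qed

end


context W begin

lemma T_char:
  assumes "c \<in> (\<int>::'a set)"
  shows "c ^ t = 0 \<or> (\<exists>j. c ^ t = omega ^ j)"
proof (cases "c = 0")
  case True then show ?thesis using tpos by simp
next
  case False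
  then obtain i where i: "c = g ^ i" using g_props(2) by blast
  have cp: "c ^ p = c" using Ints_fermat[OF pprime cardF assms] .
  obtain p' where p': "p = Suc p'" using p2 by (cases p) auto
  have "c ^ p' = 1" using cp False p' by (simp add: power_Suc2)
  then have "g ^ (i * (p - 1)) = 1" using i p' by (simp add: power_mult)
  then have "(p - 1) * e dvd (p - 1) * i" using g_props(3) e_prop by (simp add: mult.commute)
  then have "e dvd i" using p2 by simp
  then obtain u where u: "i = e * u" by blast
  have "c ^ t = (c0 ^ t) ^ u" using i u by (simp add: c0_def power_mult[symmetric] mult_ac)
  then show ?thesis using c0t by auto
qed

lemma omega_T: "\<exists>c\<in>(\<int>::'a set). omega ^ j = c ^ t"
proof -
  have "(c0 ^ j) ^ t = omega ^ j" by (simp add: c0t[symmetric] power_mult[symmetric] mult.commute)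
  then show ?thesis using c0_Ints by (intro bexI[of _ "c0 ^ j"]) auto
qed

lemma kpow: "y ^ k = 0 \<or> (\<exists>i j. i < b \<and> y ^ k = omega ^ j * zeta ^ i)"
proof (cases "y = 0")
  case True then show ?thesis using qk by simp
next
  case False
  then obtain m where m: "y = g ^ m" using g_props(2) by blast
  have "y ^ k = zeta ^ m" using m by (simp add: zeta_def power_mult[symmetric] mult.commute)
  also have "m = b * (m div b) + m mod b" by simp
  then have "zeta ^ m = omega ^ (m div b) * zeta ^ (m mod b)"
    by (metis omega_def power_add power_mult)
  finally have "y ^ k = omega ^ (m div b) * zeta ^ (m mod b)" .
  moreover have "m mod b < b" using b2 by simp
  ultimately show ?thesis by blast
qed

lemma kpow_rev: "omega ^ j * zeta ^ i = (g ^ (b * j + i)) ^ k"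
  by (simp add: omega_def zeta_def power_mult[symmetric] power_add power_mult_distrib mult_ac)

lemma coprime_bp: "coprime b p"
proof -
  have "\<not> b dvd p"
  proof
    assume "b dvd p" then have "b dvd b * t + 1" using pdef by simp
    then have "b dvd 1" using dvd_add_right_iff[of b "b*t" 1] by simp
    then show False using b2 by simp
  qed
  then show ?thesis using bprime by (simp add: prime_imp_coprime)
qed

lemma frob_iter:
  assumes "\<And>i. i < b \<Longrightarrow> a i \<in> (\<int>::'a set)"
  shows "(\<Sum>i<b. a i * z ^ i) ^ (p ^ j) = (\<Sum>i<b. a i * (z ^ (p ^ j)) ^ i)"
proof (induction j arbitrary: z)
  case 0 then show ?case by simp
next
  case (Suc j)
  have "(\<Sum>i<b. a i * z ^ i) ^ (p ^ Suc j) = ((\<Sum>i<b. a i * z ^ i) ^ (p ^ j)) ^ p"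
    by (simp add: power_mult[symmetric] mult.commute)
  also have "\<dots> = (\<Sum>i<b. a i * (z ^ (p ^ j)) ^ i) ^ p" using Suc by simp
  also have "\<dots> = (\<Sum>i<b. (a i * (z ^ (p ^ j)) ^ i) ^ p)" by (rule frob_sum[OF pprime charF])
  also have "\<dots> = (\<Sum>i<b. a i * (z ^ (p ^ Suc j)) ^ i)"
  proof (rule sum.cong)
    fix i assume "i \<in> {..<b}"
    then have "a i ^ p = a i" using Ints_fermat[OF pprime cardF] assms by auto
    then show "(a i * (z ^ (p ^ j)) ^ i) ^ p = a i * (z ^ (p ^ Suc j)) ^ i"
      by (simp add: power_mult_distrib power_mult[symmetric] mult_ac)
  qed simp
  finally show ?case .
qed

lemma zeta_pow_inj: "inj_on (\<lambda>j. zeta ^ (p ^ j)) {..<b}"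
proof -
  have main: "False" if "j < j'" "j' < b" "zeta ^ (p ^ j) = zeta ^ (p ^ j')" for j j'
  proof -
    have le: "p ^ j \<le> p ^ j'" using that p2 by (intro power_increasing) auto
    have "b^2 dvd (p ^ j' - p ^ j)" using zeta_eq[OF that(3) le] .
    moreover have "p ^ j' - p ^ j = p ^ j * (p ^ (j' - j) - 1)"
    proof -
      have "p ^ j' = p ^ (j + (j' - j))" using that(1) by simp
      also have "\<dots> = p ^ j * p ^ (j' - j)" by (rule power_add)
      finally show ?thesis by (simp only: diff_mult_distrib2 mult_1_right)
    qed
    ultimately have "b^2 dvd p ^ j * (p ^ (j' - j) - 1)" by simp
    moreover have "coprime (b^2) (p ^ j)" using coprime_bp by simp
    ultimately have d1: "b^2 dvd (p ^ (j' - j) - 1)" by (simp add: coprime_dvd_mult_right_iff)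
    obtain m where m: "p ^ (j' - j) = 1 + (j' - j) * b * t + b^2 * m" using pow_expand by blast
    have "b^2 dvd ((j' - j) * b * t + b^2 * m)" using d1 m by simp
    then have "b^2 dvd (j' - j) * b * t" by (simp add: dvd_add_left_iff)
    then have "b * b dvd b * ((j' - j) * t)" by (simp add: power2_eq_square mult_ac)
    then have "b dvd (j' - j) * t" using b2 by simp
    then have "b dvd (j' - j)" using nbt bprime prime_dvd_mult_iff by blast
    moreover have "0 < j' - j" "j' - j < b" using that by auto
    ultimately show False using nat_dvd_not_less by blast
  qed
  show ?thesis
  proof (rule inj_onI)
    fix x y assume "x \<in> {..<b}" "y \<in> {..<b}" "zeta ^ p ^ x = zeta ^ p ^ y"
    then show "x = y" using main[of x y] main[of y x] by (cases x y rule: linorder_cases) auto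
  qed
qed

lemma lin_indep:
  assumes ints: "\<And>i. i < b \<Longrightarrow> a i \<in> (\<int>::'a set)"
    and sum0: "(\<Sum>i<b. a i * zeta ^ i) = 0"
  shows "\<forall>i<b. a i = 0"
proof (rule ccontr)
  assume "\<not> (\<forall>i<b. a i = 0)"
  then obtain i0 where i0: "i0 < b" "a i0 \<noteq> 0" by blast
  define P :: "'a poly" where "P = (\<Sum>i<b. monom (a i) i)"
  have "coeff P i0 = a i0" using i0 by (simp add: P_def coeff_sum coeff_monom)
  then have P0: "P \<noteq> 0" using i0 by auto
  have degP: "degree P \<le> b - 1" unfolding P_def
    by (rule degree_sum_le) (auto intro: order.trans[OF degree_monom_le])
  have polyP: "poly P z = (\<Sum>i<b. a i * z ^ i)" for z by (simp add: P_def poly_sum poly_monom)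
  have "(\<lambda>j. zeta ^ (p ^ j)) ` {..<b} \<subseteq> {x. poly P x = 0}"
  proof
    fix x assume "x \<in> (\<lambda>j. zeta ^ (p ^ j)) ` {..<b}"
    then obtain j where x: "x = zeta ^ (p ^ j)" by blast
    have "poly P x = (\<Sum>i<b. a i * zeta ^ i) ^ (p ^ j)" using frob_iter[OF ints, where z=zeta and j=j] x polyP
      by simp
    then show "x \<in> {x. poly P x = 0}" using sum0 p2 by simp
  qed
  then have "card ((\<lambda>j. zeta ^ (p ^ j)) ` {..<b}) \<le> card {x. poly P x = 0}"
    by (intro card_mono) auto
  also have "\<dots> \<le> b - 1" using card_poly_roots_bound[OF P0] degP by simp
  finally show False using zeta_pow_inj b2 by (simp add: card_image)
qed

end


lemma sum_pair_reindex:
  fixes G :: "nat \<Rightarrow> nat \<Rightarrow> 'x::comm_monoid_add"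
  shows "(\<Sum>i<b. \<Sum>j<s. G i j) = (\<Sum>l<b*s. G (l div s) (l mod s))"
proof -
  have "(\<Sum>l<b*s. G (l div s) (l mod s)) = (\<Sum>m<b. \<Sum>l\<in>{m*s..<m*s+s}. G (l div s) (l mod s))"
    by (rule sum.nat_group[symmetric])
  also have "\<dots> = (\<Sum>m<b. \<Sum>j<s. G m j)"
  proof (rule sum.cong)
    fix m assume "m \<in> {..<b}"
    have "(\<Sum>l\<in>{m*s..<m*s+s}. G (l div s) (l mod s)) = (\<Sum>l\<in>{0+m*s..<s+m*s}. G (l div s) (l mod s))"
      by (simp add: add.commute)
    also have "\<dots> = (\<Sum>j\<in>{0..<s}. G ((j + m*s) div s) ((j + m*s) mod s))"
      by (rule sum.shift_bounds_nat_ivl)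
    also have "\<dots> = (\<Sum>j<s. G m j)"
      by (rule sum.cong) auto
    finally show "(\<Sum>l\<in>{m*s..<m*s+s}. G (l div s) (l mod s)) = (\<Sum>j<s. G m j)" .
  qed simp
  finally show ?thesis by simp
qed

lemma pad_sum:
  fixes C :: "nat \<Rightarrow> 'x::field"
  assumes "finite J" "card J \<le> M" "\<And>j. j \<in> J \<Longrightarrow> C j \<in> \<int>" "t > 0"
  shows "\<exists>f. (\<forall>l. f l \<in> \<int>) \<and> (\<Sum>j\<in>J. C j ^ t) = (\<Sum>l<M. f l ^ t)"
proof -
  obtain h where h: "bij_betw h {0..<card J} J" using ex_bij_betw_nat_finite[OF assms(1)] by blast
  define f where "f l = (if l < card J then C (h l) else 0)" for l
  have hJ: "\<And>l. l < card J \<Longrightarrow> h l \<in> J" using bij_betwE[OF h] by auto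
  have "\<forall>l. f l \<in> \<int>" using hJ assms(3) by (auto simp: f_def)
  moreover have "(\<Sum>l<M. f l ^ t) = (\<Sum>j\<in>J. C j ^ t)"
  proof -
    have "(\<Sum>l<M. f l ^ t) = (\<Sum>l\<in>{0..<card J}. f l ^ t)"
      using assms(2,4) by (intro sum.mono_neutral_right) (auto simp: f_def)
    also have "\<dots> = (\<Sum>l\<in>{0..<card J}. C (h l) ^ t)" by (rule sum.cong) (auto simp: f_def)
    also have "\<dots> = (\<Sum>j\<in>J. C j ^ t)" by (rule sum.reindex_bij_betw[OF h])
    finally show ?thesis .
  qed
  ultimately show ?thesis by metis
qed

context W begin

definition GP :: "nat \<Rightarrow> bool" where
  "GP s \<longleftrightarrow> (\<forall>a\<in>(\<int>::'a set). \<exists>f. (\<forall>i. f i \<in> \<int>) \<and> a = (\<Sum>i<s. f i ^ t))"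

lemma span: "\<exists>a. (\<forall>i<b. a i \<in> (\<int>::'a set)) \<and> x = (\<Sum>i<b. a i * zeta ^ i)"
proof -
  define D where "D = (PiE {..<b} (\<lambda>_. (\<int>::'a set)))"
  define \<Phi> where "\<Phi> a = (\<Sum>i<b. a i * zeta ^ i)" for a
  have inj: "inj_on \<Phi> D"
  proof (rule inj_onI)
    fix a a' assume a: "a \<in> D" and a': "a' \<in> D" and eq: "\<Phi> a = \<Phi> a'"
    have "(\<Sum>i<b. (a i - a' i) * zeta ^ i) = \<Phi> a - \<Phi> a'"
      unfolding \<Phi>_def left_diff_distrib by (rule sum_subtractf)
    then have "(\<Sum>i<b. (a i - a' i) * zeta ^ i) = 0" using eq by simp
    moreover have "a i - a' i \<in> \<int>" if "i < b" for i
    proof -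
      have "a i \<in> \<int>" "a' i \<in> \<int>" using a a' that unfolding D_def by (auto simp: PiE_iff)
      then show ?thesis by (rule Ints_diff)
    qed
    ultimately have "\<forall>i<b. a i - a' i = 0" using lin_indep[of "\<lambda>i. a i - a' i"] by blast
    then show "a = a'" using a a' unfolding D_def by (intro PiE_ext) auto
  qed
  have "card (\<Phi> ` D) = card D" using inj by (rule card_image)
  also have "\<dots> = p ^ b" using card_Ints[OF pprime cardF] by (simp add: D_def card_PiE)
  finally have "\<Phi> ` D = UNIV" using cardF by (intro card_subset_eq) auto
  then obtain a where "a \<in> D" "x = \<Phi> a" by (metis UNIV_I imageE)
  then show ?thesis by (auto simp: D_def \<Phi>_def)
qed

lemma k_power_of_T: "c \<in> (\<int>::'a set) \<Longrightarrow> \<exists>y. c ^ t * zeta ^ i = y ^ k"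
proof -
  assume "c \<in> \<int>"
  from T_char[OF this] show ?thesis
  proof
    assume "c ^ t = 0" then show ?thesis using qk by (intro exI[of _ 0]) (simp add: power_0_left)
  next
    assume "\<exists>j. c ^ t = omega ^ j"
    then obtain j where "c ^ t = omega ^ j" by blast
    then show ?thesis using kpow_rev by auto
  qed
qed

lemma upper: assumes "GP s" shows "waring_rep k (b * s) TYPE('a)"
  unfolding waring_rep_def
proof
  fix x :: 'a
  obtain a where a: "\<forall>i<b. a i \<in> \<int>" "x = (\<Sum>i<b. a i * zeta ^ i)" using span by blast
  have "\<forall>i. \<exists>f. i < b \<longrightarrow> (\<forall>j. f j \<in> \<int>) \<and> a i = (\<Sum>j<s. f j ^ t)"
    using assms a(1) unfolding GP_def by blast
  then obtain F where F: "\<And>i. i < b \<Longrightarrow> (\<forall>j. F i j \<in> \<int>) \<and> a i = (\<Sum>j<s. F i j ^ t)"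
    by metis
  have "\<forall>i j. \<exists>y. i < b \<longrightarrow> F i j ^ t * zeta ^ i = y ^ k" using F k_power_of_T by blast
  then obtain H where H: "\<And>i j. i < b \<Longrightarrow> F i j ^ t * zeta ^ i = H i j ^ k" by metis
  have "x = (\<Sum>i<b. (\<Sum>j<s. F i j ^ t) * zeta ^ i)" using a F by simp
  also have "\<dots> = (\<Sum>i<b. \<Sum>j<s. H i j ^ k)"
    by (rule sum.cong) (auto simp: sum_distrib_right H)
  also have "\<dots> = (\<Sum>l<b*s. H (l div s) (l mod s) ^ k)" by (rule sum_pair_reindex)
  finally show "\<exists>f. x = (\<Sum>i<b * s. f i ^ k)" by (intro exI[of _ "\<lambda>l. H (l div s) (l mod s)"])
qed

lemma kpow_T: "\<exists>c i. i < b \<and> c \<in> (\<int>::'a set) \<and> y ^ k = c ^ t * zeta ^ i"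
proof -
  from kpow[of y] show ?thesis
  proof
    assume "y ^ k = 0" then show ?thesis using b2 tpos by (intro exI[of _ 0] exI[of _ 0]) (simp add: power_0_left)
  next
    assume "\<exists>i j. i < b \<and> y ^ k = omega ^ j * zeta ^ i"
    then obtain i j where ij: "i < b" "y ^ k = omega ^ j * zeta ^ i" by blast
    obtain c where "c \<in> \<int>" "omega ^ j = c ^ t" using omega_T by blast
    then show ?thesis using ij by auto
  qed
qed

lemma lower: assumes "waring_rep k s TYPE('a)" shows "GP (s div b)"
  unfolding GP_def
proof
  fix a :: 'a assume aI: "a \<in> \<int>"
  obtain f where f: "(\<Sum>i<b. a * zeta ^ i) = (\<Sum>j<s. f j ^ k)"
    using assms unfolding waring_rep_def by blast
  have "\<forall>j. \<exists>c i. i < b \<and> c \<in> (\<int>::'a set) \<and> f j ^ k = c ^ t * zeta ^ i" using kpow_T by blast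
  then obtain C I where CI: "\<And>j. I j < b" "\<And>j. C j \<in> \<int>" "\<And>j. f j ^ k = C j ^ t * zeta ^ I j"
    by metis
  define A where "A i = (\<Sum>j<s. if I j = i then C j ^ t else 0)" for i
  have "(\<Sum>j<s. f j ^ k) = (\<Sum>j<s. \<Sum>i<b. if I j = i then C j ^ t * zeta ^ i else 0)"
    using CI(1) by (intro sum.cong) (auto simp: CI(3))
  also have "\<dots> = (\<Sum>i<b. \<Sum>j<s. if I j = i then C j ^ t * zeta ^ i else 0)" by (rule sum.swap)
  also have "\<dots> = (\<Sum>i<b. A i * zeta ^ i)"
    unfolding A_def sum_distrib_right by (intro sum.cong refl) auto
  finally have fA: "(\<Sum>i<b. a * zeta ^ i) = (\<Sum>i<b. A i * zeta ^ i)" using f by simp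
  have "(\<Sum>i<b. (a - A i) * zeta ^ i) = (\<Sum>i<b. a * zeta ^ i) - (\<Sum>i<b. A i * zeta ^ i)"
    unfolding left_diff_distrib by (rule sum_subtractf)
  then have "(\<Sum>i<b. (a - A i) * zeta ^ i) = 0" using fA by simp
  moreover have "\<And>i. a - A i \<in> \<int>" using aI CI(2) by (auto simp: A_def intro!: Ints_sum)
  ultimately have aA: "\<forall>i<b. a - A i = 0" using lin_indep[of "\<lambda>i. a - A i"] by blast
  define J where "J i = {j\<in>{..<s}. I j = i}" for i
  have cardJ: "card (J i) = (\<Sum>j<s. if I j = i then 1 else 0)" for i
  proof -
    have "card (J i) = (\<Sum>j\<in>J i. 1)" by (rule card_eq_sum)
    also have "\<dots> = (\<Sum>j<s. if I j = i then 1 else 0)" unfolding J_def by (rule sum.inter_filter) simp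
    finally show ?thesis .
  qed
  have "(\<Sum>i<b. card (J i)) = (\<Sum>j<s. \<Sum>i<b. if I j = i then 1 else 0)"
    unfolding cardJ by (rule sum.swap)
  also have "\<dots> = s" using CI(1) by simp
  finally have sumJ: "(\<Sum>i<b. card (J i)) = s" .
  have "\<exists>i<b. card (J i) \<le> s div b"
  proof (rule ccontr)
    assume "\<not> ?thesis"
    then have "\<And>i. i \<in> {..<b} \<Longrightarrow> Suc (s div b) \<le> card (J i)" by auto
    then have "of_nat (card {..<b}) * Suc (s div b) \<le> (\<Sum>i<b. card (J i))"
      by (rule sum_bounded_below)
    then have "b * Suc (s div b) \<le> s" using sumJ by simp
    moreover have "s < b * Suc (s div b)"
    proof -
      have "s = b * (s div b) + s mod b" by simp
      moreover have "s mod b < b" using b2 by simp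
      ultimately show ?thesis unfolding mult_Suc_right by linarith
    qed
    ultimately show False by simp
  qed
  then obtain i where i: "i < b" "card (J i) \<le> s div b" by blast
  have "a = A i" using aA i by simp
  also have "A i = (\<Sum>j\<in>J i. C j ^ t)" unfolding A_def J_def by (rule sum.inter_filter[symmetric]) simp
  finally have "a = (\<Sum>j\<in>J i. C j ^ t)" .
  moreover obtain g' where "\<forall>l. g' l \<in> \<int>" "(\<Sum>j\<in>J i. C j ^ t) = (\<Sum>l<s div b. g' l ^ t)"
    using pad_sum[of "J i" "s div b" C t] i CI(2) tpos by (auto simp: J_def)
  ultimately show "\<exists>f. (\<forall>i. f i \<in> \<int>) \<and> a = (\<Sum>i<s div b. f i ^ t)" by auto
qed

lemma GP_p: "GP p"
  unfolding GP_def
proof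
  fix a :: 'a assume "a \<in> \<int>"
  then obtain m where m: "m < p" "a = of_nat m" using Ints_eq_nat_image[OF pprime cardF] by auto
  define f where "f l = (if l < m then (1::'a) else 0)" for l
  have "(\<Sum>l<p. f l ^ t) = (\<Sum>l<m. f l ^ t)"
    using m(1) tpos by (intro sum.mono_neutral_right) (auto simp: f_def)
  also have "\<dots> = of_nat m" by (simp add: f_def)
  finally show "\<exists>f. (\<forall>i. f i \<in> \<int>) \<and> a = (\<Sum>i<p. f i ^ t)" using m(2)
    by (intro exI[of _ f]) (auto simp: f_def)
qed

lemma waringF: "(\<exists>s. waring_rep k s TYPE('a)) \<and> waring_number k TYPE('a) = b * (LEAST s. GP s)"
proof -
  have ex: "GP (LEAST s. GP s)" using GP_p by (rule LeastI)
  have "waring_number k TYPE('a) = b * (LEAST s. GP s)"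
    unfolding waring_number_def
  proof (rule Least_equality)
    show "waring_rep k (b * (LEAST s. GP s)) TYPE('a)" using upper[OF ex] .
    fix s assume "waring_rep k s TYPE('a)"
    then have "GP (s div b)" by (rule lower)
    then have "(LEAST s. GP s) \<le> s div b" by (rule Least_le)
    then have "b * (LEAST s. GP s) \<le> b * (s div b)" by (rule mult_le_mono2)
    also have "\<dots> \<le> s" by (rule times_div_less_eq_dividend)
    finally show "b * (LEAST s. GP s) \<le> s" .
  qed
  then show ?thesis using upper[OF GP_p] by blast
qed

lemma transfer:
  assumes cc: "card (UNIV :: 'c::{field,finite} set) = p"
  shows "waring_rep t s TYPE('c) \<longleftrightarrow> GP s"
proof -
  have cc1: "card (UNIV :: 'c set) = p ^ 1" using cc by simp
  have allc: "(\<int>::'c set) = UNIV" using card_Ints[OF pprime cc1] cc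
    by (metis card_subset_eq finite subset_UNIV)
  have eqc: "((of_int u :: 'c) = of_int v) \<longleftrightarrow> int p dvd (u - v)" for u v
    using of_int_eq_iff_dvd[OF pprime cc1] .
  have eqa: "((of_int u :: 'a) = of_int v) \<longleftrightarrow> int p dvd (u - v)" for u v
    using of_int_eq_iff_dvd[OF pprime cardF] .
  show ?thesis
  proof
    assume W: "waring_rep t s TYPE('c)"
    show "GP s" unfolding GP_def
    proof
      fix a :: 'a assume "a \<in> \<int>"
      then obtain u where u: "a = of_int u" by (auto elim: Ints_cases)
      obtain f :: "nat \<Rightarrow> 'c" where f: "(of_int u :: 'c) = (\<Sum>i<s. f i ^ t)"
        using W unfolding waring_rep_def by blast
      have "\<forall>i. \<exists>r. f i = of_int r" using allc by (metis Ints_cases UNIV_I)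
      then obtain r where r: "\<And>i. f i = of_int (r i)" by metis
      have "(of_int u :: 'c) = of_int (\<Sum>i<s. r i ^ t)" using f r by simp
      then have "(of_int u :: 'a) = of_int (\<Sum>i<s. r i ^ t)" by (simp only: eqc eqa)
      then show "\<exists>f. (\<forall>i. f i \<in> \<int>) \<and> a = (\<Sum>i<s. f i ^ t)" using u
        by (intro exI[of _ "\<lambda>i. of_int (r i)"]) auto
    qed
  next
    assume G: "GP s"
    show "waring_rep t s TYPE('c)" unfolding waring_rep_def
    proof
      fix x :: 'c
      obtain u where u: "x = of_int u" using allc by (metis Ints_cases UNIV_I)
      have uI: "(of_int u :: 'a) \<in> \<int>" by simp
      obtain f :: "nat \<Rightarrow> 'a" where f: "\<forall>i. f i \<in> \<int>" "(of_int u :: 'a) = (\<Sum>i<s. f i ^ t)"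
        using G uI unfolding GP_def by blast
      have "\<forall>i. \<exists>r. f i = of_int r" using f(1) by (meson Ints_cases)
      then obtain r where r: "\<And>i. f i = of_int (r i)" by metis
      have "(of_int u :: 'a) = of_int (\<Sum>i<s. r i ^ t)" using f r by simp
      then have "(of_int u :: 'c) = of_int (\<Sum>i<s. r i ^ t)" by (simp only: eqc eqa)
      then show "\<exists>f. x = (\<Sum>i<s. f i ^ t)" using u
        by (intro exI[of _ "\<lambda>i. of_int (r i)"]) auto
    qed
  qed
qed

end


context W begin

lemma omega_inj: "inj_on (\<lambda>j. omega ^ j) {..<b}"
proof -
  have main: False if "j < j'" "j' < b" "omega ^ j = omega ^ j'" for j j'
  proof -
    have "zeta ^ (b * j) = zeta ^ (b * j')" using that(3) by (simp add: omega_def power_mult)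
    moreover have "b * j \<le> b * j'" using that(1) by simp
    ultimately have "b^2 dvd (b * j' - b * j)" by (rule zeta_eq)
    then have "b * b dvd b * (j' - j)" by (simp add: power2_eq_square diff_mult_distrib2)
    then have "b dvd (j' - j)" using b2 by simp
    moreover have "0 < j' - j" "j' - j < b" using that by auto
    ultimately show False using nat_dvd_not_less by blast
  qed
  show ?thesis
  proof (rule inj_onI)
    fix x y assume "x \<in> {..<b}" "y \<in> {..<b}" "omega ^ x = omega ^ y"
    then show "x = y" using main[of x y] main[of y x] by (cases x y rule: linorder_cases) auto
  qed
qed

lemma omega_nz: "omega ^ j \<noteq> 0" using zeta_nz by (simp add: omega_def)

lemma G2:
  assumes t2: "t = 2"
  shows "(LEAST s. GP s) = 2"
proof (rule Least_equality)
  show "GP 2" unfolding GP_def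
  proof
    fix a :: 'a assume aI: "a \<in> \<int>"
    define S where "S = (\<lambda>c. c ^ 2) ` (\<int>::'a set)"
    define S' where "S' = (\<lambda>x. a - x) ` S"
    have SI: "S \<subseteq> \<int>" by (auto simp: S_def)
    have S'I: "S' \<subseteq> \<int>" using SI aI by (auto simp: S'_def)
    have sub: "insert 0 ((\<lambda>j. omega ^ j) ` {..<b}) \<subseteq> S"
    proof
      fix x assume "x \<in> insert 0 ((\<lambda>j. omega ^ j) ` {..<b})"
      then show "x \<in> S"
      proof
        assume "x = 0" then show "x \<in> S" unfolding S_def by (intro image_eqI[of _ _ 0]) auto
      next
        assume "x \<in> (\<lambda>j. omega ^ j) ` {..<b}"
        then obtain j where "x = omega ^ j" by blast
        moreover obtain c where "c \<in> \<int>" "omega ^ j = c ^ t" using omega_T by blast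
        ultimately show "x \<in> S" unfolding S_def using t2 by blast
      qed
    qed
    have n0: "0 \<notin> (\<lambda>j. omega ^ j) ` {..<b}"
    proof
      assume "0 \<in> (\<lambda>j. omega ^ j) ` {..<b}"
      then obtain j where "0 = omega ^ j" by blast
      then show False using omega_nz by metis
    qed
    have cb: "card ((\<lambda>j. omega ^ j) ` {..<b}) = b" using omega_inj by (simp add: card_image)
    have "card (insert 0 ((\<lambda>j. omega ^ j) ` {..<b})) = b + 1"
      using card_insert_disjoint[OF _ n0] cb by simp
    then have cS: "b + 1 \<le> card S" using card_mono[OF _ sub] by simp
    have cS': "card S' = card S" unfolding S'_def by (rule card_image) (auto intro: inj_onI)
    have "S \<inter> S' \<noteq> {}"
    proof
      assume "S \<inter> S' = {}"
      then have "card (S \<union> S') = card S + card S'" by (intro card_Un_disjoint) auto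
      moreover have "card (S \<union> S') \<le> card (\<int>::'a set)" using SI S'I by (intro card_mono) auto
      ultimately show False using cS cS' card_Ints[OF pprime cardF] pdef t2 by simp
    qed
    then obtain x where "x \<in> S" "x \<in> S'" by blast
    then obtain c d where cd: "c \<in> \<int>" "d \<in> \<int>" "x = c ^ 2" "x = a - d ^ 2"
      unfolding S'_def S_def by blast
    show "\<exists>f. (\<forall>i. f i \<in> \<int>) \<and> a = (\<Sum>i<(2::nat). f i ^ t)"
      using cd t2 by (intro exI[of _ "\<lambda>i. if i = 0 then c else d"]) (auto simp: numeral_2_eq_2 algebra_simps eq_diff_eq)
  qed
next
  fix s assume G: "GP s"
  show "2 \<le> s"
  proof (rule ccontr)
    assume "\<not> 2 \<le> s"
    then have "s = 0 \<or> s = 1" by auto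
    then show False
    proof
      assume "s = 0"
      then have "(1::'a) = 0" using G unfolding GP_def by (metis Ints_1 lessThan_0 sum.empty)
      then show False by simp
    next
      assume s1: "s = 1"
      have all: "\<forall>a\<in>(\<int>::'a set). \<exists>c\<in>\<int>. a = c ^ 2" using G s1 t2 unfolding GP_def by fastforce
      have "(\<lambda>c. c ^ 2) ` (\<int>::'a set) = \<int>" using all by (auto simp: image_iff)
      then have "inj_on (\<lambda>c::'a. c ^ 2) \<int>"
        by (intro eq_card_imp_inj_on) (auto simp: card_Ints[OF pprime cardF] Ints_eq_nat_image[OF pprime cardF])
      moreover have "(1::'a) ^ 2 = (-1) ^ 2" by simp
      ultimately have "(1::'a) = -1" by (rule inj_onD) auto
      then have "(of_int 2 :: 'a) = of_int 0" by (simp add: eq_neg_iff_add_eq_0)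
      then have "int p dvd 2" using of_int_eq_iff_dvd[OF pprime cardF, of 2 0] by simp
      then have "p \<le> 2" using zdvd_imp_le by fastforce
      then show False using pdef t2 b2 by simp
    qed
  qed
qed

end

theorem mainTheorem9:
  fixes b p t :: nat
  shows "(prime b \<and> prime p \<and> t > 0 \<and> p = b * t + 1 \<and> \<not> b dvd t
            \<and> card (UNIV :: 'a set) = p ^ b \<and> card (UNIV :: 'c set) = p
          \<longrightarrow> (\<exists>s. waring_rep ((p ^ b - 1) div b\<^sup>2) s TYPE('a::{field,finite}))
              \<and> (\<exists>s. waring_rep t s TYPE('c::{field,finite}))
              \<and> waring_number ((p ^ b - 1) div b\<^sup>2) TYPE('a) = b * waring_number t TYPE('c))
       \<and> (prime b \<and> odd b \<and> p = 2 * b + 1 \<and> prime p \<and> card (UNIV :: 'a set) = p ^ b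
          \<longrightarrow> (\<exists>s. waring_rep ((p ^ b - 1) div b\<^sup>2) s TYPE('a))
              \<and> waring_number ((p ^ b - 1) div b\<^sup>2) TYPE('a) = 2 * b)"
proof (intro conjI impI)
  assume h: "prime b \<and> prime p \<and> t > 0 \<and> p = b * t + 1 \<and> \<not> b dvd t
            \<and> card (UNIV :: 'a set) = p ^ b \<and> card (UNIV :: 'c set) = p"
  interpret W b p t "TYPE('a)" using h by unfold_locales auto
  have cc: "card (UNIV :: 'c set) = p" using h by simp
  have eqL: "waring_number t TYPE('c) = (LEAST s. GP s)"
    unfolding waring_number_def using transfer[OF cc] by simp
  show "\<exists>s. waring_rep ((p ^ b - 1) div b\<^sup>2) s TYPE('a)" using waringF by (simp add: k_def)
  show "\<exists>s. waring_rep t s TYPE('c)" using transfer[OF cc] GP_p by blast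
  show "waring_number ((p ^ b - 1) div b\<^sup>2) TYPE('a) = b * waring_number t TYPE('c)"
    using waringF eqL by (simp add: k_def)
next
  assume h: "prime b \<and> odd b \<and> p = 2 * b + 1 \<and> prime p \<and> card (UNIV :: 'a set) = p ^ b"
  have "\<not> b dvd 2"
  proof
    assume "b dvd 2"
    then have "b \<le> 2" by (simp add: dvd_imp_le)
    moreover have "b \<ge> 2" using h prime_ge_2_nat by blast
    ultimately have "b = 2" by simp
    then show False using h by simp
  qed
  then interpret W b p 2 "TYPE('a)" using h by unfold_locales auto
  show "\<exists>s. waring_rep ((p ^ b - 1) div b\<^sup>2) s TYPE('a)" using waringF by (simp add: k_def)
  show "waring_number ((p ^ b - 1) div b\<^sup>2) TYPE('a) = 2 * b"
    using waringF G2 by (simp add: k_def)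
qed


end
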